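(* Let $w$ be an infinite word on $\mathcal{A}$ with infinitely many palindromic prefixes, and let $(n_i)_{i\ge1}$ be the increasing sequence of the lengths of its palindromic prefixes ($n_1=0$). The following are equivalent: (i) $n_{i+1}\le 2n_i+1$ for all $i\ge1$; (ii) there is a function $\psi$ (as in the context) with $w=w_\psi$; (iii) there is a reduced function $\psi$ with $w=w_\psi$. Moreover, the reduced function $\psi$ in (iii) is unique.
   Context: $\mathcal{A}$ is an alphabet (finite or infinite) disjoint from $\mathbb{N}^*=\{1,2,\dots\}$; $\varepsilon$ is a palindrome. The functions considered are maps $\psi:\mathbb{N}^*\to\mathbb{N}^*\sqcup\mathcal{A}$ such that for every $n\ge1$ either $\psi(n)\in\mathcal{A}$ or $1\le\psi(n)\le n-1$. Associated words: $\pi_1=\varepsilon$ and, for $i\ge1$: if $\psi(i)\in\mathcal{A}$, $\pi_{i+1}=\pi_i\,\psi(i)\,\pi_i$; if $\psi(i)\in\mathbb{N}^*$, then $\pi_{\psi(i)}$ is a prefix of $\pi_i$, and writing $\pi_i=\pi_{\psi(i)}b_i$, $\pi_{i+1}=\pi_ib_i$. Each $\pi_i$ is a palindrome and a proper prefix of $\pi_{i+1}$; $w_\psi$ is the infinite word having all $\pi_i$ as prefixes. Let $(t_k)_{k\ge0}$ be the (finite or infinite) family, in increasing order, of all $n\ge1$ with $\psi(n)\in\mathcal{A}$ or $1\le\psi(n)\le n-2$. $\psi$ is reduced if for every $k\ge1$ such that $t_k$ exists: $\psi(t_k)\neq\psi(t_{k-1})$, and either $\psi(t_k)\in\mathcal{A}$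 or $\psi(t_k)<t_{k-1}$. *)

theory Defs
  imports Main "HOL-Library.Infinite_Set"
begin

text \<open>Alphabet: the type 'a. A function psi : N* -> N* + A is modelled as
  nat => 'a + nat, with Inl a a letter and Inr m a positive integer.
  Only the values at n >= 1 matter.\<close>

definition admissible :: "(nat \<Rightarrow> 'a + nat) \<Rightarrow> bool" where
  "admissible \<psi> \<longleftrightarrow> (\<forall>n\<ge>1. case \<psi> n of Inl a \<Rightarrow> True | Inr m \<Rightarrow> 1 \<le> m \<and> m \<le> n - 1)"

text \<open>pis psi k = [pi_1, ..., pi_(k+1)].\<close>
primrec pis :: "(nat \<Rightarrow> 'a + nat) \<Rightarrow> nat \<Rightarrow> 'a list list" where
  "pis \<psi> 0 = [[]]"
| "pis \<psi> (Suc k) =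
     (let L = pis \<psi> k; p = last L
      in L @ [case \<psi> (Suc k) of
                Inl a \<Rightarrow> p @ [a] @ p
              | Inr m \<Rightarrow> p @ drop (length (L ! (m - 1))) p])"

definition pi :: "(nat \<Rightarrow> 'a + nat) \<Rightarrow> nat \<Rightarrow> 'a list" where
  "pi \<psi> i = pis \<psi> (i - 1) ! (i - 1)"

definition prefix_of_inf :: "'a list \<Rightarrow> (nat \<Rightarrow> 'a) \<Rightarrow> bool" where
  "prefix_of_inf u w \<longleftrightarrow> (\<forall>j<length u. u ! j = w j)"

definition is_w_psi :: "(nat \<Rightarrow> 'a + nat) \<Rightarrow> (nat \<Rightarrow> 'a) \<Rightarrow> bool" where
  "is_w_psi \<psi> w \<longleftrightarrow> (\<forall>i\<ge>1. prefix_of_inf (pi \<psi> i) w)"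

definition tset :: "(nat \<Rightarrow> 'a + nat) \<Rightarrow> nat set" where
  "tset \<psi> = {n. n \<ge> 1 \<and> (case \<psi> n of Inl a \<Rightarrow> True | Inr m \<Rightarrow> 1 \<le> m \<and> m \<le> n - 2)}"

definition reduced :: "(nat \<Rightarrow> 'a + nat) \<Rightarrow> bool" where
  "reduced \<psi> \<longleftrightarrow> admissible \<psi> \<and>
     (\<forall>s t. s \<in> tset \<psi> \<and> t \<in> tset \<psi> \<and> s < t \<and> (\<forall>u\<in>tset \<psi>. \<not> (s < u \<and> u < t)) \<longrightarrow>
        \<psi> t \<noteq> \<psi> s \<and> (case \<psi> t of Inl a \<Rightarrow> True | Inr m \<Rightarrow> m < s))"

definition pal_prefix_lengths :: "(nat \<Rightarrow> 'a) \<Rightarrow> nat set" where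
  "pal_prefix_lengths w = {n. \<forall>j<n. w j = w (n - 1 - j)}"

end

theory Submission
  imports Defs
begin


definition pal :: "(nat \<Rightarrow> 'a) \<Rightarrow> nat \<Rightarrow> bool" where
  "pal w L \<longleftrightarrow> (\<forall>j<L. w j = w (L - 1 - j))"

definition per :: "(nat \<Rightarrow> 'a) \<Rightarrow> nat \<Rightarrow> nat \<Rightarrow> bool" where
  "per w q M \<longleftrightarrow> (\<forall>y. y + q < M \<longrightarrow> w y = w (y + q))"

lemma pal_S: "pal w L \<longleftrightarrow> L \<in> pal_prefix_lengths w"
  by (simp add: pal_def pal_prefix_lengths_def)

lemma palD: "pal w L \<Longrightarrow> j < L \<Longrightarrow> w j = w (L - 1 - j)"
  unfolding pal_def by blast

lemma perD: "per w q M \<Longrightarrow> y + q < M \<Longrightarrow> w y = w (y + q)"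
  unfolding per_def by blast

lemma G: assumes "a < b" "pal w a" "pal w b" shows "per w (b - a) b"
  unfolding per_def
proof (intro allI impI)
  fix y assume y: "y + (b - a) < b"
  have "w (y + (b - a)) = w (b - 1 - (y + (b - a)))"
    using palD[OF assms(3) y] .
  also have "b - 1 - (y + (b - a)) = a - 1 - y" using y assms(1) by simp
  also have "w (a - 1 - y) = w (a - 1 - (a - 1 - y))"
    using palD[OF assms(2), of "a - 1 - y"] y assms(1) by simp
  also have "a - 1 - (a - 1 - y) = y" using y assms(1) by simp
  finally show "w y = w (y + (b - a))" by simp
qed

lemma H: assumes "pal w b" "per w q b" "q \<le> b" shows "pal w (b - q)"
  unfolding pal_def
proof (intro allI impI)
  fix j assume j: "j < b - q"
  have "w (b - q - 1 - j) = w (b - 1 - (b - q - 1 - j))"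
    using palD[OF assms(1), of "b - q - 1 - j"] j by simp
  also have "b - 1 - (b - q - 1 - j) = j + q" using j by simp
  also have "w (j + q) = w j" using perD[OF assms(2), of j] j by simp
  finally show "w j = w (b - q - 1 - j)" by simp
qed

lemma Refl: assumes "a < b" "b \<le> 2 * a" "pal w a" "pal w b" shows "pal w (2 * a - b)"
  unfolding pal_def
proof (intro allI impI)
  fix j assume j: "j < 2 * a - b"
  have "w j = w (a - 1 - j)" using palD[OF assms(3), of j] j assms by simp
  also have "a - 1 - j = b - 1 - (b - a + j)" using j assms by simp
  also have "w (b - 1 - (b - a + j)) = w (b - a + j)"
    using palD[OF assms(4), of "b - a + j"] j assms by simp
  also have "b - a + j = a - 1 - (2 * a - b - 1 - j)"
    using j assms by simp
  also have "w \<dots> = w (2 * a - b - 1 - j)"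
    using palD[OF assms(3), of "2 * a - b - 1 - j"] j assms by simp
  finally show "w j = w (2 * a - b - 1 - j)" .
qed

lemma per_mono: "per w q M \<Longrightarrow> M' \<le> M \<Longrightarrow> per w q M'"
  unfolding per_def by auto

lemma per_res: assumes "per w q M" "q > 0" "y < M" shows "w y = w (y mod q)"
  using assms(3)
proof (induction y rule: less_induct)
  case (less y)
  show ?case
  proof (cases "y < q")
    case True then show ?thesis by simp
  next
    case False
    then have "w (y - q) = w (y - q + q)" using perD[OF assms(1), of "y - q"] less.prems by simp
    moreover have "w (y - q) = w ((y - q) mod q)" using less.IH[of "y - q"] assms(2) less.prems False by simp
    moreover have "(y - q) mod q = y mod q" using False by (simp add: le_mod_geq not_less)
    ultimately show ?thesis using False by simp
  qed
qed

lemma res_per: assumes "\<And>y. y < M \<Longrightarrow> w y = w (y mod q)" shows "per w q M"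
  unfolding per_def
proof (intro allI impI)
  fix y assume "y + q < M"
  then show "w y = w (y + q)" using assms[of y] assms[of "y+q"] by simp
qed

lemma int_period_nat: fixes f :: "int \<Rightarrow> 'a" assumes "\<And>z. f (z + p) = f z" shows "f (z + int n * p) = f z"
proof (induction n arbitrary: z)
  case 0 then show ?case by simp
next
  case (Suc n)
  have "z + int (Suc n) * p = (z + int n * p) + p" by (simp add: algebra_simps)
  then have "f (z + int (Suc n) * p) = f (z + int n * p)" using assms[of "z + int n * p"] by (simp add: add.assoc)
  then show ?case using Suc by simp
qed

lemma int_period: fixes f :: "int \<Rightarrow> 'a" and k :: int assumes "\<And>z. f (z + p) = f z" shows "f (z + k * p) = f z"
proof (cases "k \<ge> 0")
  case True
  then obtain n where "k = int n" using nonneg_int_cases by blast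
  then show ?thesis using int_period_nat[where f=f, OF assms] by simp
next
  case False
  define n where "n = nat (- k)"
  have n: "k = - int n" using False unfolding n_def by simp
  have "f ((z + k * p) + int n * p) = f (z + k * p)" using int_period_nat[where f=f, OF assms] by blast
  then show ?thesis using n by (simp add: algebra_simps)
qed

lemma TA:
  assumes pq: "per w q M" and q: "q > 0" and p1: "pal w L1" and p2: "pal w L2"
    and lt: "L1 < L2" and le: "L2 \<le> M" and qL: "q \<le> L1 + 1"
  shows "per w (gcd q (L2 - L1)) M"
proof -
  define f where "f z = w (nat (z mod int q))" for z :: int
  have refl: "f z = f (int L - 1 - z)" if pL: "pal w L" and L1L: "L1 \<le> L" and LM: "L \<le> M" for z L
  proof -
    define r where "r = nat (z mod int q)"
    have r: "r < q" "int r = z mod int q" using q unfolding r_def by (auto simp: nat_less_iff)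
    have fz: "f z = w r" unfolding f_def r_def by simp
    have e: "(int L - 1 - z) mod int q = (int L - 1 - int r) mod int q"
      using r(2) by (metis mod_diff_right_eq)
    show ?thesis
    proof (cases "r < L")
      case True
      have "w r = w (L - 1 - r)" using palD[OF pL True] .
      also have "\<dots> = w ((L - 1 - r) mod q)" using per_res[OF pq q] True LM by simp
      finally have A: "w r = w ((L - 1 - r) mod q)" .
      have B: "int ((L - 1 - r) mod q) = (int L - 1 - int r) mod int q"
        using True by (simp add: zmod_int of_nat_diff algebra_simps)
      have "f (int L - 1 - z) = w (nat (int ((L - 1 - r) mod q)))" unfolding f_def using e B by simp
      then show ?thesis using fz A by simp
    next
      case False
      then have "r = L" "L = q - 1" using r(1) qL L1L by auto
      then have "(int L - 1 - int r) mod int q = int r" using q r(1) by (simp add: mod_pos_pos_trivial zmod_minus1 of_nat_diff)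
      then show ?thesis using fz e unfolding f_def by simp
    qed
  qed
  have pD: "f (z + int (L2 - L1)) = f z" for z
  proof -
    have "f z = f (int L1 - 1 - z)" using refl[OF p1] lt le by simp
    also have "\<dots> = f (int L2 - 1 - (int L1 - 1 - z))" using refl[OF p2, of "int L1 - 1 - z"] lt le by linarith
    also have "int L2 - 1 - (int L1 - 1 - z) = z + int (L2 - L1)" using lt by simp
    finally show ?thesis by simp
  qed
  have pq': "f (z + int q) = f z" for z
    unfolding f_def by simp
  obtain u v where uv: "u * int q + v * int (L2 - L1) = gcd (int q) (int (L2 - L1))"
    using bezout_int by blast
  have g: "int (gcd q (L2 - L1)) = u * int q + v * int (L2 - L1)" using uv by (simp add: gcd_int_def)
  have pg: "f (z + int (gcd q (L2 - L1))) = f z" for z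
  proof -
    have "f (z + int (gcd q (L2 - L1))) = f ((z + u * int q) + v * int (L2 - L1))" using g by (simp add: algebra_simps)
    also have "\<dots> = f (z + u * int q)" by (rule int_period[where f=f, OF pD])
    also have "\<dots> = f z" by (rule int_period[where f=f, OF pq'])
    finally show ?thesis .
  qed
  have wf: "w y = f (int y)" if "y < M" for y
    using per_res[OF pq q that] unfolding f_def by (metis nat_int zmod_int)
  show ?thesis unfolding per_def
  proof (intro allI impI)
    fix y assume y: "y + gcd q (L2 - L1) < M"
    have "w (y + gcd q (L2 - L1)) = f (int y + int (gcd q (L2 - L1)))" using wf[OF y] by simp
    also have "\<dots> = f (int y)" by (rule pg)
    also have "\<dots> = w y" using wf y by simp
    finally show "w y = w (y + gcd q (L2 - L1))" by simp
  qed
qed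



lemma length_pis: "length (pis \<psi> k) = Suc k"
  by (induction k) (auto simp: Let_def)

lemma pis_nth_stable: "j \<le> k \<Longrightarrow> k \<le> K \<Longrightarrow> pis \<psi> K ! j = pis \<psi> k ! j"
proof (induction K)
  case 0 then show ?case by simp
next
  case (Suc K)
  show ?case
  proof (cases "k = Suc K")
    case True then show ?thesis by simp
  next
    case False
    then have "k \<le> K" using Suc by simp
    then have "pis \<psi> (Suc K) ! j = pis \<psi> K ! j"
      using Suc.prems length_pis[of \<psi> K] by (simp add: Let_def nth_append)
    then show ?thesis using Suc.IH Suc.prems \<open>k \<le> K\<close> by simp
  qed
qed

lemma pi_1: "pi \<psi> (Suc 0) = []"
  by (simp add: pi_def)

lemma pis_last: "pis \<psi> (Suc k) ! Suc k =
   (case \<psi> (Suc k) of Inl a \<Rightarrow> pis \<psi> k ! k @ [a] @ pis \<psi> k ! k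
    | Inr m \<Rightarrow> pis \<psi> k ! k @ drop (length (pis \<psi> k ! (m - 1))) (pis \<psi> k ! k))"
proof -
  have l: "last (pis \<psi> k) = pis \<psi> k ! k" using length_pis[of \<psi> k]
    by (metis diff_Suc_1 last_conv_nth list.size(3) nat.distinct(1))
  show ?thesis using length_pis[of \<psi> k] apply (simp add: Let_def nth_append) by (simp only: l)
qed

lemma pi_Suc_Inl: assumes "\<psi> i = Inl x" "i \<ge> 1"
  shows "pi \<psi> (Suc i) = pi \<psi> i @ [x] @ pi \<psi> i"
proof -
  obtain k where k: "i = Suc k" using assms(2) by (cases i) auto
  show ?thesis using pis_last[of \<psi> k] assms k by (simp add: pi_def)
qed

lemma pi_Suc_Inr: assumes "\<psi> i = Inr m" "i \<ge> 1" "m \<le> i"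
  shows "pi \<psi> (Suc i) = pi \<psi> i @ drop (length (pi \<psi> m)) (pi \<psi> i)"
proof -
  obtain k where k: "i = Suc k" using assms(2) by (cases i) auto
  have "pis \<psi> k ! (m - 1) = pi \<psi> m"
    unfolding pi_def using pis_nth_stable[of "m - 1" "m - 1" k \<psi>] assms k by simp
  then show ?thesis using pis_last[of \<psi> k] assms k by (simp add: pi_def)
qed

definition Nl :: "(nat \<Rightarrow> 'a + nat) \<Rightarrow> nat \<Rightarrow> nat" where
  "Nl \<psi> i = length (pi \<psi> i)"

lemma pal_Inl: assumes "pal w a" "\<And>z. z < a \<Longrightarrow> w (a + 1 + z) = w z"
  shows "pal w (2 * a + 1)"
  unfolding pal_def
proof (intro allI impI)
  fix j assume j: "j < 2 * a + 1"
  consider "j < a" | "j = a" | "j > a" by linarith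
  then show "w j = w (2 * a + 1 - 1 - j)"
  proof cases
    case 1
    have e: "2 * a + 1 - 1 - j = a + 1 + (a - 1 - j)" using 1 by simp
    have "w (2 * a + 1 - 1 - j) = w (a + 1 + (a - 1 - j))" unfolding e ..
    also have "\<dots> = w (a - 1 - j)" by (rule assms(2)) (use 1 in simp)
    also have "\<dots> = w j"
      using palD[OF assms(1), of j] 1 by simp
    finally show ?thesis by simp
  next
    case 2 then show ?thesis by simp
  next
    case 3
    define z where "z = j - (a + 1)"
    have z: "j = a + 1 + z" "z < a" using j 3 unfolding z_def by auto
    have "w j = w z" using assms(2) z by simp
    also have "\<dots> = w (a - 1 - z)" using palD[OF assms(1), of z] z by simp
    also have "a - 1 - z = 2 * a + 1 - 1 - j" using z by simp
    finally show ?thesis .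
  qed
qed

lemma pal_Inr: assumes "pal w a" "pal w c" "c < a" "\<And>z. z < a - c \<Longrightarrow> w (a + z) = w (c + z)"
  shows "pal w (a + (a - c))"
  unfolding pal_def
proof (intro allI impI)
  fix y assume y: "y < a + (a - c)"
  have pc: "per w (a - c) a" using G[OF assms(3) assms(2) assms(1)] .
  consider "y < a - c" | "a - c \<le> y" "y < a" | "a \<le> y" by linarith
  then show "w y = w (a + (a - c) - 1 - y)"
  proof cases
    case 1
    have e: "a + (a - c) - 1 - y = a + (a - c - 1 - y)" using 1 by simp
    have "w (a + (a - c) - 1 - y) = w (c + (a - c - 1 - y))" unfolding e by (rule assms(4)) (use 1 in simp)
    also have "c + (a - c - 1 - y) = a - 1 - y" using 1 by simp
    also have "w (a - 1 - y) = w y" using palD[OF assms(1), of y] 1 by simp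
    finally show ?thesis by simp
  next
    case 2
    have "w (a + (a - c) - 1 - y) = w (a - 1 - (a + (a - c) - 1 - y))" using palD[OF assms(1), of "a + (a - c) - 1 - y"] 2 by simp
    also have "a - 1 - (a + (a - c) - 1 - y) = y - (a - c)" using 2 by simp
    also have "w (y - (a - c)) = w (y - (a - c) + (a - c))" using perD[OF pc, of "y - (a - c)"] 2 by simp
    also have "y - (a - c) + (a - c) = y" using 2 by simp
    finally show ?thesis by simp
  next
    case 3
    define z where "z = y - a"
    have z: "y = a + z" "z < a - c" using y 3 unfolding z_def by auto
    have "w y = w (c + z)" using assms(4) z by simp
    also have "\<dots> = w (a - 1 - (c + z))" using palD[OF assms(2), of "c + z"] palD[OF assms(1), of "c + z"] z by simp
    also have "a - 1 - (c + z) = a + (a - c) - 1 - y" using z by simp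
    finally show ?thesis .
  qed
qed



locale wpsi =
  fixes \<psi> :: "nat \<Rightarrow> 'a + nat" and w :: "nat \<Rightarrow> 'a"
  assumes adm: "admissible \<psi>" and ww: "is_w_psi \<psi> w"
begin

abbreviation N where "N \<equiv> Nl \<psi>"

lemma adm_Inr: assumes "i \<ge> 1" "\<psi> i = Inr m" shows "1 \<le> m \<and> m < i"
proof -
  have "case \<psi> i of Inl a \<Rightarrow> True | Inr m \<Rightarrow> 1 \<le> m \<and> m \<le> i - 1"
    using adm assms(1) unfolding admissible_def by blast
  then have "1 \<le> m \<and> m \<le> i - 1" using assms(2) by simp
  then show ?thesis using assms(1) by arith
qed

lemma adm_1: "\<exists>x. \<psi> (Suc 0) = Inl x"
proof (cases "\<psi> (Suc 0)")
  case (Inl x) then show ?thesis by simp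
next
  case (Inr m) then show ?thesis using adm_Inr[OF _ Inr] by force
qed

lemma nth_w: "i \<ge> 1 \<Longrightarrow> j < N i \<Longrightarrow> pi \<psi> i ! j = w j"
  using ww unfolding is_w_psi_def prefix_of_inf_def Nl_def by blast

lemma N1: "N (Suc 0) = 0"
  by (simp add: Nl_def pi_1)

lemma sInl: assumes "i \<ge> 1" "\<psi> i = Inl x"
  shows "N (Suc i) = 2 * N i + 1 \<and> w (N i) = x \<and> (\<forall>z<N i. w (N i + 1 + z) = w z)"
proof -
  have e: "pi \<psi> (Suc i) = pi \<psi> i @ [x] @ pi \<psi> i" using pi_Suc_Inl[of \<psi> i x, OF assms(2,1)] .
  have l: "N (Suc i) = 2 * N i + 1" unfolding Nl_def e by simp
  have "w (N i) = pi \<psi> (Suc i) ! N i" using nth_w[of "Suc i" "N i"] l by simp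
  also have "\<dots> = x" unfolding e by (simp add: nth_append Nl_def)
  finally have x: "w (N i) = x" .
  have "w (N i + 1 + z) = w z" if z: "z < N i" for z
  proof -
    have "w (N i + 1 + z) = pi \<psi> (Suc i) ! (N i + 1 + z)" using nth_w[of "Suc i" "N i + 1 + z"] l z by simp
    also have "\<dots> = pi \<psi> i ! z" unfolding e by (simp add: nth_append Nl_def)
    also have "\<dots> = w z" using nth_w[OF assms(1) z] .
    finally show ?thesis .
  qed
  then show ?thesis using l x by blast
qed

lemma sInr: assumes "i \<ge> 1" "\<psi> i = Inr m"
  shows "N (Suc i) = N i + (N i - N m) \<and> (\<forall>z<N i - N m. w (N i + z) = w (N m + z))"
proof -
  have mi: "m \<le> i" using adm_Inr[OF assms] by simp
  have e: "pi \<psi> (Suc i) = pi \<psi> i @ drop (N m) (pi \<psi> i)" using pi_Suc_Inr[of \<psi> i m, OF assms(2,1) mi] unfolding Nl_def .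
  have l: "N (Suc i) = N i + (N i - N m)" using e by (simp add: Nl_def)
  have "w (N i + z) = w (N m + z)" if z: "z < N i - N m" for z
  proof -
    have "w (N i + z) = pi \<psi> (Suc i) ! (N i + z)" using nth_w[of "Suc i" "N i + z"] l z by simp
    also have "\<dots> = pi \<psi> i ! (N m + z)" unfolding e using z by (simp add: nth_append Nl_def)
    also have "\<dots> = w (N m + z)" using nth_w[OF assms(1), of "N m + z"] z by simp
    finally show ?thesis .
  qed
  then show ?thesis using l by blast
qed

lemma mono_aux: "\<forall>j. 1 \<le> j \<longrightarrow> j < i \<longrightarrow> N j < N i"
proof (induction i)
  case 0 then show ?case by simp
next
  case (Suc i)
  show ?case
  proof (intro allI impI)
    fix j assume j: "1 \<le> j" "j < Suc i"
    then have i1: "i \<ge> 1" by simp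
    have step: "N i < N (Suc i)"
    proof (cases "\<psi> i")
      case (Inl x) then show ?thesis using sInl[OF i1 Inl] by simp
    next
      case (Inr m)
      then have "1 \<le> m" "m < i" using adm_Inr[OF i1] by auto
      then have "N m < N i" using Suc.IH by blast
      then show ?thesis using sInr[OF i1 Inr] by simp
    qed
    show "N j < N (Suc i)"
    proof (cases "j = i")
      case True then show ?thesis using step by simp
    next
      case False then show ?thesis using Suc.IH j step by force
    qed
  qed
qed

lemma Nmono: "1 \<le> j \<Longrightarrow> j < i \<Longrightarrow> N j < N i"
  using mono_aux by blast

lemma Nmono_iff: "1 \<le> j \<Longrightarrow> 1 \<le> i \<Longrightarrow> N j < N i \<longleftrightarrow> j < i"
  using Nmono by (metis less_asym linorder_neqE_nat)

lemma Nmono_le_iff: "1 \<le> j \<Longrightarrow> 1 \<le> i \<Longrightarrow> N j \<le> N i \<longleftrightarrow> j \<le> i"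
  using Nmono_iff by (meson not_le)

lemma Ninj: "1 \<le> j \<Longrightarrow> 1 \<le> i \<Longrightarrow> N j = N i \<Longrightarrow> j = i"
  using Nmono_iff by (metis nat_neq_iff)

lemma sInr': assumes "i \<ge> 1" "\<psi> i = Inr m"
  shows "1 \<le> m \<and> m < i \<and> N m < N i \<and> N (Suc i) = 2 * N i - N m \<and> (\<forall>z<N i - N m. w (N i + z) = w (N m + z))"
  using sInr[OF assms] adm_Inr[OF assms] Nmono[of m i] by auto

lemma palN: "i \<ge> 1 \<Longrightarrow> pal w (N i)"
proof (induction i rule: less_induct)
  case (less i)
  show ?case
  proof (cases "i = 1")
    case True then show ?thesis using N1 by (simp add: pal_def)
  next
    case False
    then obtain k where k: "i = Suc k" "k \<ge> 1" using less.prems by (cases i) auto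
    have pk: "pal w (N k)" using less.IH k by simp
    show ?thesis
    proof (cases "\<psi> k")
      case (Inl x)
      from sInl[OF k(2) Inl] have "N i = 2 * N k + 1" "\<forall>z<N k. w (N k + 1 + z) = w z" using k by auto
      then show ?thesis using pal_Inl[OF pk] by simp
    next
      case (Inr m)
      from sInr'[OF k(2) Inr] have m: "1 \<le> m" "m < k" "N m < N k" "N i = N k + (N k - N m)"
        "\<forall>z<N k - N m. w (N k + z) = w (N m + z)" using k by auto
      have pm: "pal w (N m)" using less.IH m k by simp
      show ?thesis using pal_Inr[OF pk pm m(3)] m(4,5) by simp
    qed
  qed
qed

lemma N_le: assumes "i \<ge> 1" shows "N (Suc i) \<le> 2 * N i + 1"
proof (cases "\<psi> i")
  case (Inl x) then show ?thesis using sInl[OF assms Inl] by simp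
next
  case (Inr m) then show ?thesis using sInr'[OF assms Inr] by simp
qed

lemma N_ge: "i \<ge> 1 \<Longrightarrow> i - 1 \<le> N i"
proof (induction i)
  case 0 then show ?case by simp
next
  case (Suc i)
  show ?case
  proof (cases "i = 0")
    case True then show ?thesis by simp
  next
    case False
    then have "N i < N (Suc i)" using Nmono[of i "Suc i"] by simp
    then show ?thesis using Suc False by simp
  qed
qed

end



lemma ext_dvd: assumes "per w d a" "per w p b" "d dvd p" "p \<le> a" "d > 0" "p > 0"
  shows "per w d b"
proof -
  have "w y = w (y mod d)" if "y < b" for y
    using that
  proof (induction y rule: less_induct)
    case (less y)
    show ?case
    proof (cases "y < a")
      case True then show ?thesis using per_res[OF assms(1) assms(5)] by simp
    next
      case False
      then have yp: "p \<le> y" using assms(4) by simp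
      have "w (y - p) = w (y - p + p)" using perD[OF assms(2), of "y - p"] yp less.prems by simp
      then have "w y = w (y - p)" using yp by simp
      also have "\<dots> = w ((y - p) mod d)"
        using less.IH[of "y - p"] less.prems yp assms(6) by simp
      also have "(y - p) mod d = y mod d"
      proof -
        obtain c where c: "p = d * c" using assms(3) by (auto elim: dvdE)
        have "y = (y - p) + d * c" using yp c by simp
        then have "y mod d = ((y - p) + d * c) mod d" by (rule arg_cong)
        then show ?thesis by simp
      qed
      finally show ?thesis .
    qed
  qed
  then show ?thesis by (rule res_per)
qed

context wpsi
begin

definition fullat :: "nat \<Rightarrow> bool" where
  "fullat i \<longleftrightarrow> (\<forall>c. pal w c \<longrightarrow> N i < c \<longrightarrow> c < N (Suc i) \<longrightarrow> False)"

lemma tset_ge1: "u \<in> tset \<psi> \<Longrightarrow> u \<ge> 1"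
  unfolding tset_def by simp

lemma tset_1: "Suc 0 \<in> tset \<psi>"
  using adm_1 unfolding tset_def by auto

lemma tset_Inr: "t \<in> tset \<psi> \<Longrightarrow> \<psi> t = Inr m \<Longrightarrow> m \<le> t - 2"
  unfolding tset_def by auto

lemma not_tset: assumes "u \<ge> 1" "u \<notin> tset \<psi>" shows "\<psi> u = Inr (u - 1)"
proof (cases "\<psi> u")
  case (Inl x) then show ?thesis using assms unfolding tset_def by auto
next
  case (Inr m)
  then have "\<not> (1 \<le> m \<and> m \<le> u - 2)" using assms unfolding tset_def by auto
  moreover have "1 \<le> m \<and> m < u" using adm_Inr[OF assms(1) Inr] .
  ultimately have "m = u - 1" by arith
  then show ?thesis using Inr by simp
qed

lemma block:
  assumes s: "s \<in> tset \<psi>" and t: "t \<in> tset \<psi>" and st: "s < t"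
    and none: "\<forall>u\<in>tset \<psi>. \<not> (s < u \<and> u < t)"
    and j: "s \<le> j" "j \<le> t"
  shows "N j = N s + (j - s) * (N (Suc s) - N s)"
proof -
  define d where "d = N (Suc s) - N s"
  have s1: "s \<ge> 1" using tset_ge1[OF s] .
  have dpos: "N (Suc s) = N s + d" unfolding d_def using Nmono[of s "Suc s"] s1 by simp
  have Q: "s + k + 1 \<le> t \<longrightarrow> N (s + k) = N s + k * d \<and> N (s + k + 1) = N s + (k + 1) * d" for k
  proof (induction k)
    case 0 then show ?case using dpos by simp
  next
    case (Suc k)
    show ?case
    proof
      assume le: "s + Suc k + 1 \<le> t"
      define u where "u = s + k + 1"
      have u: "s < u" "u < t" "u \<ge> 1" using le unfolding u_def by auto
      have "u \<notin> tset \<psi>" using none u by blast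
      then have pu: "\<psi> u = Inr (u - 1)" using not_tset u(3) by blast
      have IH: "N (s + k) = N s + k * d" "N (s + k + 1) = N s + (k + 1) * d" using Suc le by auto
      have "N (Suc u) = 2 * N u - N (u - 1)" using sInr'[OF u(3) pu] by simp
      also have "u - 1 = s + k" unfolding u_def by simp
      finally have "N (Suc u) = 2 * (N s + (k + 1) * d) - (N s + k * d)" using IH unfolding u_def by simp
      then have "N (s + Suc k + 1) = N s + (Suc k + 1) * d" unfolding u_def by (simp add: algebra_simps)
      then show "N (s + Suc k) = N s + Suc k * d \<and> N (s + Suc k + 1) = N s + (Suc k + 1) * d"
        using IH by simp
    qed
  qed
  show ?thesis
  proof (cases "j < t")
    case True
    then have "N (s + (j - s)) = N s + (j - s) * d" using Q[of "j - s"] j by simp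
    then show ?thesis using j unfolding d_def by simp
  next
    case False
    then have jt: "j = t" using j by simp
    obtain k where k: "t = s + k + 1" using st by (metis add.commute add_Suc less_iff_Suc_add plus_1_eq_Suc)
    have "N (s + k + 1) = N s + (k + 1) * d" using Q[of k] k by simp
    then show ?thesis using jt k unfolding d_def by simp
  qed
qed

end



lemma mod_shift: "(y::nat) = x + k * d \<Longrightarrow> y mod d = x mod d"
  by simp

context wpsi
begin

lemma full_reduced: assumes full: "\<And>i. i \<ge> 1 \<Longrightarrow> fullat i" shows "reduced \<psi>"
  unfolding reduced_def
proof (rule conjI[OF adm], intro allI impI)
  fix s t assume HH: "s \<in> tset \<psi> \<and> t \<in> tset \<psi> \<and> s < t \<and> (\<forall>u\<in>tset \<psi>. \<not> (s < u \<and> u < t))"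
  then have s: "s \<in> tset \<psi>" and t: "t \<in> tset \<psi>" and st: "s < t" and none: "\<forall>u\<in>tset \<psi>. \<not> (s < u \<and> u < t)"
    by auto
  have s1: "s \<ge> 1" using tset_ge1[OF s] .
  have t1: "t \<ge> 1" using s1 st by simp
  define d where "d = N (Suc s) - N s"
  define a where "a = N t"
  have blk: "N j = N s + (j - s) * d" if "s \<le> j" "j \<le> t" for j
    using block[OF s t st none that] unfolding d_def .
  have dpos: "d > 0" unfolding d_def using Nmono[of s "Suc s"] s1 by simp
  have at: "a = N s + (t - s) * d" unfolding a_def using blk[of t] st by simp
  have at1: "N (t - 1) = N s + (t - 1 - s) * d" using blk[of "t - 1"] st by simp
  have tsd: "(t - s) * d = (t - 1 - s) * d + d" using st
    by (metis Suc_diff_Suc add.commute diff_Suc_1 diff_commute mult_Suc)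
  have ad: "a = N (t - 1) + d" using at at1 tsd by simp
  have perd: "per w d a"
  proof -
    have "N (t - 1) < a" using ad dpos by simp
    moreover have "pal w (N (t - 1))" using palN[of "t - 1"] s1 st by simp
    moreover have "pal w a" unfolding a_def using palN[OF t1] .
    ultimately have "per w (a - N (t - 1)) a" by (rule G)
    then show ?thesis using ad by simp
  qed
  have res: "w y = w (y mod d)" if "y < a" for y using per_res[OF perd dpos that] .
  show "\<psi> t \<noteq> \<psi> s \<and> (case \<psi> t of Inl a \<Rightarrow> True | Inr m \<Rightarrow> m < s)"
  proof (rule ccontr)
    assume V: "\<not> (\<psi> t \<noteq> \<psi> s \<and> (case \<psi> t of Inl x \<Rightarrow> True | Inr m \<Rightarrow> m < s))"
    have key: "per w d (N (Suc t)) \<and> d < N (Suc t) - a"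
    proof (cases "\<psi> t")
      case (Inl x)
      then have psx: "\<psi> s = Inl x" using V by auto
      from sInl[OF s1 psx] have ds: "d = N s + 1" "w (N s) = x" unfolding d_def by auto
      from sInl[OF t1 Inl] have bt: "N (Suc t) = 2 * a + 1" "w a = x" "\<forall>z<a. w (a + 1 + z) = w z"
        unfolding a_def by auto
      have Nsa: "N s < a" unfolding a_def using Nmono[OF s1 st] .
      have r: "w y = w (y mod d)" if y: "y < N (Suc t)" for y
      proof -
        consider "y < a" | "y = a" | "a < y" by linarith
        then show ?thesis
        proof cases
          case 1 then show ?thesis using res by simp
        next
          case 2
          have "a mod d = N s mod d" unfolding at by simp
          also have "N s mod d = N s" using ds(1) by simp
          finally have "a mod d = N s" .
          then show ?thesis using 2 bt(2) ds(2) by simp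
        next
          case 3
          define z where "z = y - a - 1"
          have z: "z < a" "y = a + 1 + z" using 3 y bt(1) unfolding z_def by auto
          have "w y = w z" using bt(3) z by simp
          also have "\<dots> = w (z mod d)" using res z by simp
          also have "z mod d = y mod d"
          proof -
            have "y = z + (t - s + 1) * d" using z at ds(1) by (simp add: algebra_simps)
            then show ?thesis using mod_shift by metis
          qed
          finally show ?thesis .
        qed
      qed
      have "per w d (N (Suc t))" by (rule res_per) (use r in blast)
      moreover have "d < N (Suc t) - a" using bt(1) ds(1) Nsa by simp
      ultimately show ?thesis by blast
    next
      case (Inr m)
      from sInr'[OF t1 Inr] have mt: "1 \<le> m" "m < t" "N m < a" "N (Suc t) = 2 * a - N m"
        "\<forall>z<a - N m. w (a + z) = w (N m + z)" unfolding a_def by auto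
      have V': "\<psi> s = Inr m \<or> s \<le> m" using V Inr by auto
      obtain k where k: "k \<ge> 2" "a = N m + k * d"
      proof (cases "\<psi> s = Inr m")
        case True
        from sInr'[OF s1 True] have "N m < N s" "N (Suc s) = 2 * N s - N m" by auto
        then have "d = N s - N m" unfolding d_def by simp
        then have e2: "N m + d = N s" using \<open>N m < N s\<close> by simp
        have e1: "(t - s + 1) * d = (t - s) * d + d" by simp
        have "a = N m + (t - s + 1) * d" using at e1 e2 by linarith
        moreover have "t - s + 1 \<ge> 2" using st by simp
        ultimately show ?thesis using that by blast
      next
        case False
        then have sm: "s \<le> m" using V' by simp
        have "m \<le> t - 2" using tset_Inr[OF t Inr] .
        then have mt2: "m + 2 \<le> t" using st mt(1) by arith
        have Nm: "N m = N s + (m - s) * d" using blk[of m] sm mt by simp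
        have "t - s = (m - s) + (t - m)" using sm mt by simp
        then have "a = N m + (t - m) * d" using at Nm by (simp add: algebra_simps)
        moreover have "t - m \<ge> 2" using mt2 by simp
        ultimately show ?thesis using that by blast
      qed
      have r: "w y = w (y mod d)" if y: "y < N (Suc t)" for y
      proof (cases "y < a")
        case True then show ?thesis using res by simp
      next
        case False
        define z where "z = y - a"
        have z: "z < a - N m" "y = a + z" using False y mt(4) unfolding z_def by auto
        have "w y = w (N m + z)" using mt(5) z by simp
        also have "\<dots> = w ((N m + z) mod d)" using res z by simp
        also have "(N m + z) mod d = y mod d"
        proof -
          have "y = (N m + z) + k * d" using z k by simp
          then show ?thesis by simp
        qed
        finally show ?thesis .
      qed
      have "per w d (N (Suc t))" by (rule res_per) (use r in blast)
      moreover have "d < N (Suc t) - a"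
      proof -
        have "N (Suc t) - a = k * d" using mt(4) k by simp
        moreover have "d < k * d" using k(1) dpos by simp
        ultimately show ?thesis by simp
      qed
      ultimately show ?thesis by blast
    qed
    have "d \<le> N (Suc t)" using key by linarith
    then have "pal w (N (Suc t) - d)" using H[OF palN[of "Suc t"]] key by simp
    moreover have "N t < N (Suc t) - d" "N (Suc t) - d < N (Suc t)" using key dpos unfolding a_def by auto
    ultimately show False using full[OF t1] unfolding fullat_def by blast
  qed
qed

end



context wpsi
begin

lemma reduced_full: assumes red: "reduced \<psi>" shows "i \<ge> 1 \<Longrightarrow> fullat i"
proof (induction i rule: less_induct)
  case (less i)
  have R: "\<psi> t \<noteq> \<psi> s \<and> (case \<psi> t of Inl x \<Rightarrow> True | Inr m \<Rightarrow> m < s)"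
    if "s \<in> tset \<psi>" "t \<in> tset \<psi>" "s < t" "\<forall>u\<in>tset \<psi>. \<not> (s < u \<and> u < t)" for s t
    using red that unfolding reduced_def by blast
  show ?case unfolding fullat_def
  proof (intro allI impI)
    fix c assume pc: "pal w c" and ac: "N i < c" and cb: "c < N (Suc i)"
    show False
    proof (cases "i = 1")
      case True
      obtain x where "\<psi> (Suc 0) = Inl x" using adm_1 by blast
      then have "N (Suc (Suc 0)) = 1" using sInl[of 1 x] N1 by simp
      then show False using ac cb True N1 by simp
    next
      case False
      then have i2: "i \<ge> 2" using less.prems by simp
      have i1: "i \<ge> 1" using i2 by simp
      have fprev: "fullat (i - 1)" using less.IH[of "i - 1"] i2 by simp
      have pa: "pal w (N i)" using palN[OF i1] .
      show False
      proof (cases "i \<in> tset \<psi>")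
        case False
        then have pi: "\<psi> i = Inr (i - 1)" using not_tset i1 by blast
        from sInr'[OF i1 pi] have b: "N (i - 1) < N i" "N (Suc i) = 2 * N i - N (i - 1)" by auto
        have "pal w (2 * N i - c)" using Refl[OF ac _ pa pc] cb b by simp
        moreover have "N (i - 1) < 2 * N i - c" "2 * N i - c < N (Suc (i - 1))" using b ac cb i1 by auto
        ultimately show False using fprev unfolding fullat_def by blast
      next
        case True
        define t where "t = i"
        have t: "t \<in> tset \<psi>" and t1: "t \<ge> 1" and t2: "t \<ge> 2" using True i1 i2 unfolding t_def by auto
        define T where "T = {u. u \<in> tset \<psi> \<and> u < t}"
        have finT: "finite T" unfolding T_def by simp
        have oneT: "Suc 0 \<in> T" unfolding T_def using tset_1 t2 by simp
        define s where "s = Max T"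
        have sT: "s \<in> T" unfolding s_def using finT oneT Max_in by blast
        have s: "s \<in> tset \<psi>" and st: "s < t" using sT unfolding T_def by auto
        have none: "\<forall>u\<in>tset \<psi>. \<not> (s < u \<and> u < t)"
        proof (intro ballI notI)
          fix u assume "u \<in> tset \<psi>" "s < u \<and> u < t"
          then have "u \<in> T" "s < u" unfolding T_def by auto
          then show False using Max_ge[OF finT] unfolding s_def by fastforce
        qed
        have R1: "\<psi> t \<noteq> \<psi> s" and R2: "case \<psi> t of Inl x \<Rightarrow> True | Inr m \<Rightarrow> m < s"
          using R[OF s t st none] by auto
        have s1: "s \<ge> 1" using tset_ge1[OF s] .
        define d where "d = N (Suc s) - N s"
        define a where "a = N t"
        have blk: "N j = N s + (j - s) * d" if "s \<le> j" "j \<le> t" for j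
          using block[OF s t st none that] unfolding d_def .
        have dpos: "d > 0" unfolding d_def using Nmono[of s "Suc s"] s1 by simp
        have at: "a = N s + (t - s) * d" unfolding a_def using blk[of t] st by simp
        have at1: "N (t - 1) = N s + (t - 1 - s) * d" using blk[of "t - 1"] st by simp
        have tsd: "(t - s) * d = (t - 1 - s) * d + d" using st
          by (metis Suc_diff_Suc add.commute diff_Suc_1 diff_commute mult_Suc)
        have ad: "a = N (t - 1) + d" using at at1 tsd by simp
        have pa: "pal w a" unfolding a_def using palN[OF t1] .
        have perd: "per w d a"
        proof -
          have "N (t - 1) < a" using ad dpos by simp
          moreover have "pal w (N (t - 1))" using palN[of "t - 1"] s1 st by simp
          ultimately have "per w (a - N (t - 1)) a" using pa by (rule G)
          then show ?thesis using ad by simp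
        qed
        have res: "w y = w (y mod d)" if "y < a" for y using per_res[OF perd dpos that] .
        have fprev': "fullat (t - 1)" using fprev unfolding t_def .
        have minper: False if g1: "1 \<le> g" and gd: "g < d" and pg: "per w g a" for g
        proof -
          have "g \<le> a" using gd ad by simp
          then have "pal w (a - g)" using H[OF pa pg] by simp
          moreover have "N (t - 1) < a - g" "a - g < N (Suc (t - 1))" using ad gd g1 t1 unfolding a_def by auto
          ultimately show False using fprev' unfolding fullat_def by blast
        qed
        have Nsa: "N s < a" unfolding a_def using Nmono[OF s1 st] .
        have "d \<le> (t - s) * d" using st by (simp add: Suc_le_eq)
        then have Nsd: "N s + d \<le> a" using at by linarith
        have a2d: "2 * d \<le> a + 1"
        proof (cases "\<psi> s")
          case (Inl y) then have "d = N s + 1" using sInl[OF s1 Inl] unfolding d_def by simp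
          then show ?thesis using Nsd by simp
        next
          case (Inr r) then have "d \<le> N s" using sInr'[OF s1 Inr] unfolding d_def by simp
          then show ?thesis using Nsd by simp
        qed
        have X: False if Xr: "\<psi> s = Inr r" and Xd: "d \<le> N r + 1" for r
        proof -
          from sInr'[OF s1 Xr] have r: "1 \<le> r" "r < s" "N r < N s" "N (Suc s) = 2 * N s - N r" by auto
          have dr: "N s = N r + d" using r unfolding d_def by simp
          have "r \<le> s - 2" using tset_Inr[OF s Xr] .
          then have rs: "r < s - 1" using r by arith
          have N1: "N r < N (s - 1)" using Nmono[of r "s - 1"] rs r by simp
          have N2: "N (s - 1) < N s" using Nmono[of "s - 1" s] rs by simp
          have p1: "pal w (N (s - 1))" using palN[of "s - 1"] rs by simp
          have p2: "pal w (N s)" using palN[OF s1] .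
          have Nsa': "N s \<le> a" using Nsa by simp
          have "d \<le> N (s - 1) + 1" using Xd N1 by simp
          from TA[OF perd dpos p1 p2 N2 Nsa' this]
          have pg: "per w (gcd d (N s - N (s - 1))) a" .
          have g1: "1 \<le> gcd d (N s - N (s - 1))" using dpos by (simp add: Suc_le_eq)
          have "gcd d (N s - N (s - 1)) \<le> N s - N (s - 1)" using N2 by (simp add: gcd_le2_nat)
          moreover have "N s - N (s - 1) < d" using N1 N2 dr by arith
          ultimately show False using minper[OF g1 _ pg] by simp
        qed
        define b where "b = N (Suc t)"
        have pb: "pal w b" unfolding b_def using palN[of "Suc t"] by simp
        have ab: "a < b" unfolding a_def b_def using Nmono[of t "Suc t"] t1 by simp
        have b2a: "b \<le> 2 * a + 1" unfolding a_def b_def using N_le[OF t1] .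
        have ac': "a < c" and cb': "c < b" using ac cb unfolding a_def b_def t_def by auto
        have perc: "per w (b - c) b" using G[OF cb' pc pb] .
        define p where "p = (LEAST p. 1 \<le> p \<and> per w p b)"
        have pP: "1 \<le> p \<and> per w p b" unfolding p_def
          by (rule LeastI[of _ "b - c"]) (use perc cb' in simp)
        have pmin: "p \<le> q" if "1 \<le> q" "per w q b" for q
          unfolding p_def by (rule Least_le) (use that in simp)
        have p1: "p \<ge> 1" and pb': "per w p b" using pP by auto
        have pbc: "p \<le> b - c" using pmin[of "b - c"] perc cb' by simp
        have pD: "p < b - a" using pbc ac' cb' by simp
        have pa': "p \<le> a" using pD b2a by simp
        have ppa: "per w p a" using per_mono[OF pb'] ab by simp
        have pd: "d \<le> p"
        proof (rule ccontr)
          assume "\<not> d \<le> p" then show False using minper[OF p1 _ ppa] by simp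
        qed
        have "per w (gcd p (b - a)) b"
          by (rule TA[OF pb' _ pa pb ab]) (use p1 pa' in auto)
        moreover have "1 \<le> gcd p (b - a)" using p1 by (simp add: Suc_le_eq)
        ultimately have "p \<le> gcd p (b - a)" using pmin by blast
        moreover have "gcd p (b - a) \<le> p" using p1 by (simp add: gcd_le1_nat)
        ultimately have "gcd p (b - a) = p" by simp
        then have pdD: "p dvd (b - a)" by (metis gcd_dvd2)
        have twop: "2 * p \<le> b - a"
        proof -
          obtain k where k: "b - a = p * k" using pdD by (auto elim: dvdE)
          have "k \<noteq> 0" using k ab by (metis mult_0_right zero_less_diff less_irrefl)
          moreover have "k \<noteq> 1" using k pD by (metis mult.right_neutral less_irrefl)
          ultimately have "k \<ge> 2" by arith
          then show ?thesis using k by simp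
        qed
        have apd: "d \<le> (a - p) + 1" using twop b2a a2d pa' ab by linarith
        have pap: "pal w (a - p)" using H[OF pa ppa pa'] .
        have "per w (gcd d (a - (a - p))) a"
          by (rule TA[OF perd dpos pap pa]) (use p1 pa' apd in auto)
        then have pgd: "per w (gcd d p) a" using pa' by simp
        have "gcd d p = d"
        proof (rule ccontr)
          assume ne: "gcd d p \<noteq> d"
          have "gcd d p \<le> d" using dpos by (simp add: gcd_le1_nat)
          moreover have "1 \<le> gcd d p" using dpos by (simp add: Suc_le_eq)
          ultimately show False using minper[OF _ _ pgd] ne by simp
        qed
        then have ddp: "d dvd p" by (metis gcd_dvd2)
        have perdb: "per w d b" using ext_dvd[OF perd pb' ddp pa' dpos] p1 by simp
        have "p \<le> d" using pmin[OF _ perdb] dpos by simp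
        then have pdq: "p = d" using pd by simp
        have ddD: "d dvd (b - a)" using pdD pdq by simp
        show False
        proof (cases "\<psi> t")
          case (Inl x)
          from sInl[OF t1 Inl] have bt: "b = 2 * a + 1" "w a = x" unfolding a_def b_def by auto
          have "w (a - d) = w (a - d + d)" using perD[OF perdb, of "a - d"] ad ab by simp
          then have wa: "w (N (t - 1)) = x" using ad bt by simp
          show False
          proof (cases "\<psi> s")
            case (Inl y)
            from sInl[OF s1 Inl] have ds: "d = N s + 1" "w (N s) = y" unfolding d_def by auto
            have "N (t - 1) mod d = N s mod d" using at1 by (rule mod_shift)
            moreover have "w (N (t - 1)) = w (N (t - 1) mod d)" using res ad dpos by simp
            moreover have "w (N s) = w (N s mod d)" using res Nsa by simp
            ultimately have "w (N (t - 1)) = w (N s)" by simp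
            then have "x = y" using wa ds(2) by simp
            then show False using R1 Inl \<open>\<psi> t = Inl x\<close> by simp
          next
            case (Inr r)
            from sInr'[OF s1 Inr] have dr: "N s = N r + d" unfolding d_def by auto
            have "b - a = (N r + 1) + (t - s + 1) * d" using bt at dr by (simp add: algebra_simps)
            then have "d dvd (N r + 1)" using ddD by (metis dvd_add_left_iff dvd_triv_right)
            then have "d \<le> N r + 1" by (rule dvd_imp_le) simp
            then show False using X[OF Inr] by simp
          qed
        next
          case (Inr m)
          from sInr'[OF t1 Inr] have mt: "1 \<le> m" "m < t" "N m < a" "b = 2 * a - N m"
            unfolding a_def b_def by auto
          have ms: "m < s" using R2 Inr by simp
          have Nms: "N m < N s" using Nmono[OF mt(1) ms] .
          obtain k where k: "b - a = k * d" using ddD by (metis dvd_def mult.commute)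
          have amk: "a = N m + k * d" using k mt by simp
          show False
          proof (cases "\<psi> s")
            case (Inl y)
            from sInl[OF s1 Inl] have ds: "d = N s + 1" unfolding d_def by auto
            have "N m + 1 + k * d = (t - s + 1) * d" using amk at ds by (simp add: algebra_simps)
            then have "d dvd (N m + 1)" by (metis dvd_add_left_iff dvd_triv_right)
            then have "d \<le> N m + 1" by (rule dvd_imp_le) simp
            then show False using ds Nms by simp
          next
            case (Inr r)
            from sInr'[OF s1 Inr] have r1: "1 \<le> r" and dr: "N s = N r + d" unfolding d_def by auto
            define j where "j = t - s + 1"
            have eq: "N m + k * d = N r + j * d" using amk at dr unfolding j_def by (simp add: algebra_simps)
            show False
            proof (cases "k \<le> j")
              case True
              then have "N m = N r + (j - k) * d" using eq by (simp add: diff_mult_distrib)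
              moreover have "j - k = 0"
              proof (rule ccontr)
                assume "j - k \<noteq> 0"
                then have "d \<le> (j - k) * d" by (simp add: Suc_le_eq)
                then show False using \<open>N m = N r + (j - k) * d\<close> Nms dr by simp
              qed
              ultimately have "N m = N r" by simp
              then have "m = r" using Ninj[OF mt(1) r1] by simp
              then show False using R1 Inr \<open>\<psi> t = Inr m\<close> by simp
            next
              case False
              then have "N r = N m + (k - j) * d" using eq by (simp add: diff_mult_distrib)
              moreover have "d \<le> (k - j) * d" using False by (simp add: Suc_le_eq)
              ultimately have "d \<le> N r + 1" by linarith
              then show False using X[OF Inr] by simp
            qed
          qed
        qed
      qed
    qed
  qed
qed

end



abbreviation E :: "(nat \<Rightarrow> 'a) \<Rightarrow> nat \<Rightarrow> nat" where
  "E w \<equiv> enumerate (pal_prefix_lengths w)"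

lemma pal0: "pal w 0" by (simp add: pal_def)

lemma E0: "E w 0 = 0"
proof -
  have "0 \<in> pal_prefix_lengths w" using pal0 pal_S by blast
  then show ?thesis by (simp add: enumerate_0)
qed

lemma E_pal: "infinite (pal_prefix_lengths w) \<Longrightarrow> pal w (E w n)"
  using enumerate_in_set pal_S by blast

lemma enum_next: fixes S :: "nat set" assumes "infinite S" "s \<in> S" "enumerate S n < s"
  shows "enumerate S (Suc n) \<le> s"
proof -
  obtain q where q: "enumerate S q = s" using enumerate_Ex[OF assms(1,2)] by blast
  then have "enumerate S n < enumerate S q" using assms(3) by simp
  then have "n < q" using enumerate_mono_iff[OF assms(1)] by blast
  then have "Suc n \<le> q" by simp
  then have "enumerate S (Suc n) \<le> enumerate S q" using enumerate_mono_le_iff[OF assms(1)] by blast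
  then show ?thesis using q by simp
qed

lemma E_next: "infinite (pal_prefix_lengths w) \<Longrightarrow> pal w c \<Longrightarrow> E w n < c \<Longrightarrow> E w (Suc n) \<le> c"
  using enum_next pal_S by blast

context wpsi
begin

lemma ii_i: assumes inf: "infinite (pal_prefix_lengths w)"
  shows "E w (Suc j) \<le> 2 * E w j + 1"
proof -
  define k where "k = (LEAST k. 1 \<le> k \<and> E w j < N k)"
  have ex: "1 \<le> E w j + 2 \<and> E w j < N (E w j + 2)" using N_ge[of "E w j + 2"] by simp
  have kP: "1 \<le> k \<and> E w j < N k" unfolding k_def by (rule LeastI[of "\<lambda>k. 1 \<le> k \<and> E w j < N k", OF ex])
  have k2: "k \<ge> 2"
  proof (rule ccontr)
    assume "\<not> k \<ge> 2" then have "k = 1" using kP by simp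
    then show False using kP N1 by simp
  qed
  have "\<not> (1 \<le> k - 1 \<and> E w j < N (k - 1))"
    unfolding k_def by (rule not_less_Least) (use k2 k_def in simp)
  moreover have "1 \<le> k - 1" using k2 by arith
  ultimately have Nk1: "N (k - 1) \<le> E w j" by simp
  have "E w (Suc j) \<le> N k" using E_next[OF inf palN] kP by simp
  also have "N k \<le> 2 * N (k - 1) + 1" using N_le[of "k - 1"] k2 by simp
  also have "\<dots> \<le> 2 * E w j + 1" using Nk1 by simp
  finally show ?thesis .
qed

lemma full_Ne: assumes inf: "infinite (pal_prefix_lengths w)" and full: "\<And>i. i \<ge> 1 \<Longrightarrow> fullat i"
  shows "i \<ge> 1 \<Longrightarrow> N i = E w (i - 1)"
proof (induction i)
  case 0 then show ?case by simp
next
  case (Suc i)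
  show ?case
  proof (cases "i = 0")
    case True then show ?thesis using N1 E0 by simp
  next
    case False
    then have i1: "i \<ge> 1" by simp
    have IH: "N i = E w (i - 1)" using Suc.IH i1 by simp
    have lt: "N i < N (Suc i)" using Nmono[of i "Suc i"] i1 by simp
    have "E w (Suc (i - 1)) \<le> N (Suc i)" using E_next[OF inf palN[of "Suc i"]] IH lt by simp
    then have le: "E w i \<le> N (Suc i)" using i1 by simp
    have "E w (i - 1) < E w i" using inf i1 by simp
    then have "N i < E w i" using IH by simp
    moreover have "pal w (E w i)" using E_pal[OF inf] .
    ultimately have "\<not> E w i < N (Suc i)" using full[OF i1] unfolding fullat_def by blast
    then show ?thesis using le by simp
  qed
qed

lemma psi_e: assumes inf: "infinite (pal_prefix_lengths w)" and Ne: "\<And>i. i \<ge> 1 \<Longrightarrow> N i = E w (i - 1)"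
  and n: "n \<ge> 1"
  shows "\<psi> n = (if E w n = 2 * E w (n - 1) + 1 then Inl (w (E w (n - 1)))
                 else Inr (THE m. 1 \<le> m \<and> E w (m - 1) = 2 * E w (n - 1) - E w n))"
proof -
  have Nn: "N n = E w (n - 1)" and Nsn: "N (Suc n) = E w n" using Ne n by auto
  show ?thesis
  proof (cases "\<psi> n")
    case (Inl x)
    from sInl[OF n Inl] show ?thesis using Inl Nn Nsn by simp
  next
    case (Inr m)
    from sInr'[OF n Inr] have m: "1 \<le> m" "m < n" "N m < N n" "N (Suc n) = 2 * N n - N m" by auto
    have Nm: "N m = E w (m - 1)" using Ne m by simp
    have ne: "E w n \<noteq> 2 * E w (n - 1) + 1" using m Nn Nsn by simp
    have "(THE m'. 1 \<le> m' \<and> E w (m' - 1) = 2 * E w (n - 1) - E w n) = m"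
    proof (rule the_equality)
      show "1 \<le> m \<and> E w (m - 1) = 2 * E w (n - 1) - E w n" using m Nm Nn Nsn by simp
    next
      fix m' assume m': "1 \<le> m' \<and> E w (m' - 1) = 2 * E w (n - 1) - E w n"
      then have "E w (m' - 1) = E w (m - 1)" using m Nm Nn Nsn by simp
      then have "m' - 1 = m - 1" using inj_enumerate[OF inf] by (meson injD)
      moreover have "1 \<le> m'" using m' by simp
      ultimately show "m' = m" using m(1) by arith
    qed
    then show ?thesis using Inr ne by simp
  qed
qed

end

definition psi0 :: "(nat \<Rightarrow> 'a) \<Rightarrow> nat \<Rightarrow> 'a + nat" where
  "psi0 w n = (if E w n = 2 * E w (n - 1) + 1 then Inl (w (E w (n - 1)))
                 else Inr (LEAST m. 1 \<le> m \<and> E w (m - 1) = 2 * E w (n - 1) - E w n))"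

lemma copy_map: assumes "\<And>z. z < L \<Longrightarrow> w (a + z) = w (c + z)"
  shows "map w [0..<a] @ map w [c..<c + L] = map w [0..<a + L]"
proof (rule nth_equalityI)
  show "length (map w [0..<a] @ map w [c..<c + L]) = length (map w [0..<a + L])" by simp
next
  fix j assume "j < length (map w [0..<a] @ map w [c..<c + L])"
  then have j: "j < a + L" by simp
  show "(map w [0..<a] @ map w [c..<c + L]) ! j = map w [0..<a + L] ! j"
  proof (cases "j < a")
    case True then show ?thesis using j by (simp add: nth_append)
  next
    case False
    then have "(map w [0..<a] @ map w [c..<c + L]) ! j = w (c + (j - a))" using j by (simp add: nth_append)
    also have "\<dots> = w (a + (j - a))" using assms[of "j - a"] j False by simp
    also have "\<dots> = map w [0..<a + L] ! j" using j False by simp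
    finally show ?thesis .
  qed
qed

lemma psi0_ok:
  assumes inf: "infinite (pal_prefix_lengths w)"
    and cond: "\<And>i. E w (Suc i) \<le> 2 * E w i + 1"
  shows "admissible (psi0 w) \<and> is_w_psi (psi0 w) w \<and> (\<forall>i\<ge>1. length (pi (psi0 w) i) = E w (i - 1))"
proof -
  have mono: "E w i < E w j \<longleftrightarrow> i < j" for i j using inf by simp
  have Inr_case: "\<exists>m. psi0 w n = Inr m \<and> 1 \<le> m \<and> m \<le> n - 1 \<and> E w (m - 1) = 2 * E w (n - 1) - E w n"
    if n: "n \<ge> 1" and ne: "E w n \<noteq> 2 * E w (n - 1) + 1" for n
  proof -
    define a b where "a = E w (n - 1)" and "b = E w n"
    have ab: "a < b" unfolding a_def b_def using mono n by simp
    have b2a: "b \<le> 2 * a" using cond[of "n - 1"] ne n unfolding a_def b_def by simp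
    have pa: "pal w a" unfolding a_def using E_pal[OF inf] .
    have pb: "pal w b" unfolding b_def using E_pal[OF inf] .
    have "pal w (2 * a - b)" using Refl[OF ab b2a pa pb] .
    then obtain q where q: "E w q = 2 * a - b" using enumerate_Ex[OF inf] pal_S by blast
    have "2 * a - b < a" using ab b2a by arith
    then have "E w q < E w (n - 1)" using q unfolding a_def by simp
    then have qn: "q < n - 1" using mono by blast
    define P where "P m = (1 \<le> m \<and> E w (m - 1) = 2 * a - b)" for m
    have Pq: "P (Suc q)" unfolding P_def using q by simp
    define m where "m = (LEAST m. P m)"
    have Pm: "P m" unfolding m_def by (rule LeastI[of P, OF Pq])
    have "m \<le> Suc q" unfolding m_def by (rule Least_le[of P, OF Pq])
    then have "m \<le> n - 1" using qn by simp
    moreover have "psi0 w n = Inr m" unfolding psi0_def m_def P_def a_def b_def using ne by simp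
    ultimately show ?thesis using Pm unfolding P_def a_def b_def by blast
  qed
  have adm: "admissible (psi0 w)"
    unfolding admissible_def
  proof (intro allI impI)
    fix n :: nat assume n: "n \<ge> 1"
    show "case psi0 w n of Inl a \<Rightarrow> True | Inr m \<Rightarrow> 1 \<le> m \<and> m \<le> n - 1"
    proof (cases "E w n = 2 * E w (n - 1) + 1")
      case True then show ?thesis unfolding psi0_def by simp
    next
      case False then show ?thesis using Inr_case[OF n False] by auto
    qed
  qed
  have pimap: "i \<ge> 1 \<Longrightarrow> pi (psi0 w) i = map w [0..<E w (i - 1)]" for i
  proof (induction i rule: less_induct)
    case (less i)
    show ?case
    proof (cases "i = 1")
      case True
      have e1: "pi (psi0 w) (Suc 0) = []" by (rule pi_1)
      have e2: "E w 0 = 0" by (rule E0)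
      show ?thesis using True e1 e2 by simp
    next
      case False
      then obtain n where ni: "i = Suc n" and n: "n \<ge> 1" using less.prems by (cases i) auto
      define a b where "a = E w (n - 1)" and "b = E w n"
      have IHn: "pi (psi0 w) n = map w [0..<a]" using less.IH[of n] ni n unfolding a_def by simp
      have pa: "pal w a" and pb: "pal w b" unfolding a_def b_def using E_pal[OF inf] by auto
      have ab: "a < b" unfolding a_def b_def using mono n by simp
      show ?thesis
      proof (cases "E w n = 2 * E w (n - 1) + 1")
        case True
        then have b: "b = 2 * a + 1" unfolding a_def b_def by simp
        have ps: "psi0 w n = Inl (w a)" unfolding psi0_def a_def using True by simp
        have "pi (psi0 w) i = map w [0..<a] @ [w a] @ map w [0..<a]"
          using pi_Suc_Inl[of "psi0 w" n "w a", OF ps n] IHn ni by simp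
        also have "\<dots> = map w [0..<a + 1] @ map w [0..<0 + a]" by simp
        also have "\<dots> = map w [0..<a + 1 + a]"
        proof (rule copy_map)
          fix z assume z: "z < a"
          have "w (a + 1 + z) = w (b - 1 - (a + 1 + z))" using palD[OF pb, of "a + 1 + z"] b z by simp
          also have "b - 1 - (a + 1 + z) = a - 1 - z" using b z by simp
          also have "w (a - 1 - z) = w (a - 1 - (a - 1 - z))" using palD[OF pa, of "a - 1 - z"] z by simp
          also have "a - 1 - (a - 1 - z) = z" using z by simp
          finally show "w (a + 1 + z) = w (0 + z)" by simp
        qed
        also have "a + 1 + a = E w (i - 1)" using b ni unfolding b_def by simp
        finally show ?thesis .
      next
        case False
        obtain m where m: "psi0 w n = Inr m" "1 \<le> m" "m \<le> n - 1" "E w (m - 1) = 2 * a - b"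
          using Inr_case[OF n False] unfolding a_def b_def by blast
        define c where "c = 2 * a - b"
        have b2a: "b \<le> 2 * a" using cond[of "n - 1"] False n unfolding a_def b_def by simp
        have ca: "c < a" unfolding c_def using ab b2a by arith
        have IHm: "pi (psi0 w) m = map w [0..<c]" using less.IH[of m] m ni unfolding c_def by simp
        have "pi (psi0 w) i = map w [0..<a] @ drop c (map w [0..<a])"
          using pi_Suc_Inr[of "psi0 w" n m, OF m(1) n] m(3) IHn IHm ni by simp
        also have "drop c (map w [0..<a]) = map w [c..<c + (a - c)]" using ca by (simp add: drop_map)
        also have "map w [0..<a] @ \<dots> = map w [0..<a + (a - c)]"
        proof (rule copy_map)
          fix z assume z: "z < a - c"
          have "w (a + z) = w (b - 1 - (a + z))" using palD[OF pb, of "a + z"] z b2a ca unfolding c_def by simp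
          also have "b - 1 - (a + z) = a - 1 - (c + z)" using z b2a ab unfolding c_def by simp
          also have "w (a - 1 - (c + z)) = w (a - 1 - (a - 1 - (c + z)))" using palD[OF pa, of "a - 1 - (c + z)"] z by simp
          also have "a - 1 - (a - 1 - (c + z)) = c + z" using z by simp
          finally show "w (a + z) = w (c + z)" .
        qed
        also have "a + (a - c) = E w (i - 1)" using ni b2a ab unfolding c_def b_def by simp
        finally show ?thesis .
      qed
    qed
  qed
  have wpsi: "is_w_psi (psi0 w) w"
    unfolding is_w_psi_def prefix_of_inf_def using pimap by simp
  show ?thesis using adm wpsi pimap by simp
qed



theorem theorem4p14:
  fixes w :: "nat \<Rightarrow> 'a"
  assumes "infinite (pal_prefix_lengths w)"
  shows "((\<forall>i. enumerate (pal_prefix_lengths w) (Suc i) \<le> 2 * enumerate (pal_prefix_lengths w) i + 1)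
            \<longleftrightarrow> (\<exists>\<psi>. admissible \<psi> \<and> is_w_psi \<psi> w))
       \<and> ((\<exists>\<psi>. admissible \<psi> \<and> is_w_psi \<psi> w) \<longleftrightarrow> (\<exists>\<psi>. reduced \<psi> \<and> is_w_psi \<psi> w))
       \<and> (\<forall>\<psi>1 \<psi>2. reduced \<psi>1 \<and> is_w_psi \<psi>1 w \<and> reduced \<psi>2 \<and> is_w_psi \<psi>2 w
            \<longrightarrow> (\<forall>n\<ge>1. \<psi>1 n = \<psi>2 n))"
proof -
  note inf = assms
  have ii_to_i: "\<forall>i. E w (Suc i) \<le> 2 * E w i + 1" if ex: "\<exists>\<psi>. admissible \<psi> \<and> is_w_psi \<psi> w"
  proof -
    obtain \<psi> where "admissible \<psi>" "is_w_psi \<psi> w" using ex by blast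
    then interpret wpsi \<psi> w by unfold_locales
    show ?thesis using ii_i[OF inf] by blast
  qed
  have i_to_iii: "\<exists>\<psi>. reduced \<psi> \<and> is_w_psi \<psi> w" if c: "\<forall>i. E w (Suc i) \<le> 2 * E w i + 1"
  proof -
    have ok: "admissible (psi0 w) \<and> is_w_psi (psi0 w) w \<and> (\<forall>i\<ge>1. length (pi (psi0 w) i) = E w (i - 1))"
      using psi0_ok[OF inf] c by blast
    interpret wpsi "psi0 w" w using ok by unfold_locales auto
    have full: "fullat i" if i1: "i \<ge> 1" for i
      unfolding fullat_def
    proof (intro allI impI)
      fix c assume pc: "pal w c" and l: "N i < c" and u: "c < N (Suc i)"
      have "N i = E w (i - 1)" "N (Suc i) = E w i" using ok i1 unfolding Nl_def by auto
      then have "E w (Suc (i - 1)) \<le> c" using E_next[OF inf pc] l by simp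
      then show False using i1 u \<open>N (Suc i) = E w i\<close> by simp
    qed
    have "reduced (psi0 w)" using full_reduced full by blast
    then show ?thesis using ok by blast
  qed
  have uniq: "\<psi>1 n = \<psi>2 n"
    if r1: "reduced \<psi>1" and w1: "is_w_psi \<psi>1 w" and r2: "reduced \<psi>2" and w2: "is_w_psi \<psi>2 w"
      and n: "n \<ge> 1" for \<psi>1 \<psi>2 n
  proof -
    interpret A: wpsi \<psi>1 w using r1 w1 unfolding reduced_def by unfold_locales auto
    interpret B: wpsi \<psi>2 w using r2 w2 unfolding reduced_def by unfold_locales auto
    have NA: "Nl \<psi>1 i = E w (i - 1)" if "i \<ge> 1" for i
      using A.full_Ne[OF inf A.reduced_full[OF r1] that] .
    have NB: "Nl \<psi>2 i = E w (i - 1)" if "i \<ge> 1" for i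
      using B.full_Ne[OF inf B.reduced_full[OF r2] that] .
    show ?thesis using A.psi_e[OF inf NA n] B.psi_e[OF inf NB n] by simp
  qed
  have red_adm: "\<exists>\<psi>. admissible \<psi> \<and> is_w_psi \<psi> w" if "\<exists>\<psi>. reduced \<psi> \<and> is_w_psi \<psi> w"
    using that unfolding reduced_def by blast
  show ?thesis
  proof (intro conjI)
    show "(\<forall>i. E w (Suc i) \<le> 2 * E w i + 1) \<longleftrightarrow> (\<exists>\<psi>. admissible \<psi> \<and> is_w_psi \<psi> w)"
      using ii_to_i i_to_iii red_adm by blast
    show "(\<exists>\<psi>. admissible \<psi> \<and> is_w_psi \<psi> w) \<longleftrightarrow> (\<exists>\<psi>. reduced \<psi> \<and> is_w_psi \<psi> w)"
      using ii_to_i i_to_iii red_adm by blast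
    show "\<forall>\<psi>1 \<psi>2. reduced \<psi>1 \<and> is_w_psi \<psi>1 w \<and> reduced \<psi>2 \<and> is_w_psi \<psi>2 w
            \<longrightarrow> (\<forall>n\<ge>1. \<psi>1 n = \<psi>2 n)"
      using uniq by blast
  qed
qed


end
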